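(* Assume $\mathcal A$ is convex and closed, $\mathcal P$ is convex and closed, $V_0$ is convex and lower semicontinuous, and $V_1$ is superlinear. Then $\mathcal N:=\mathcal L\cap(-\mathcal L)$ is a linear subspace of $\mathbb R^N$, and for every $(X,m)\in\mathcal C$ there exists $x\in\mathcal P\cap\mathcal N^\perp$ with $V_0(x)\le m$ and $X+V_1(x)\in\mathcal A$, where $\mathcal N^\perp$ is the orthogonal complement of $\mathcal N$ in $\operatorname{span}(\mathcal P)$.
   Context: Standing setup: Let $\mathcal{X}$ be a real topological vector space partially ordered by a convex cone $\mathcal{X}_+\subset\mathcal X$; write $X\ge Y$ iff $X-Y\in\mathcal X_+$. Fix $N\in\mathbb N$ and: a set $\mathcal P\subset\mathbb R^N$ with $0\in\mathcal P$; a function $V_0:\mathbb R^N\to\mathbb R$ with $V_0(0)=0$ and $V_0(x)\ge -V_0(-x)$ for all $x\in\mathbb R^N$; a map $V_1:\mathbb R^N\to\mathcal X$ with $V_1(0)=0$ and $V_1(x)\le -V_1(-x)$ for all $x\in\mathbb R^N$; a set $\mathcal A\subset\mathcal X$ with $0\in\mathcal A$ and $\mathcal A+\mathcal X_+\subset\mathcal A$. $V_1$ is superlinear if it is concave ($V_1(\lambda x+(1-\lambda)y)\ge\lambda V_1(x)+(1-\lambda)V_1(y)$, $\lambda\in[0,1]$) and positively homogeneous ($V_1(\lambda x)=\lambda V_1(x)$, $\lambda\ge0$). Asymptotic notions: for a nonempty set $C$ in a topological vector space, $C^\infty=\{X:\exists\text{ nets }(X_\alpha)\subset C,\ (\lambda_\alpha)\subset[0,\infty),\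 \lambda_\alpha\to0,\ \lambda_\alpha X_\alpha\to X\}$. For $f:\mathbb R^N\to\mathbb R$, its asymptotic function $f^\infty:\mathbb R^N\to[-\infty,\infty]$ is the function whose epigraph $\{(x,m)\in\mathbb R^N\times\mathbb R: f^\infty(x)\le m\}$ equals $(\operatorname{epi}f)^\infty$, where $\operatorname{epi}f=\{(x,m)\in\mathbb R^N\times\mathbb R: f(x)\le m\}$. $\mathcal L=\{x\in\mathcal P^\infty: V_0^\infty(x)\le0,\ V_1(x)\in\mathcal A^\infty\}$, and $\mathcal C=\{(X,m)\in\mathcal X\times\mathbb R:\exists x\in\mathcal P \text{ with } V_0(x)\le m,\ X+V_1(x)\in\mathcal A\}$. *)

theory Defs
  imports "HOL-Analysis.Analysis"
begin

definition tvs_axioms :: "'a::{real_vector,topological_space} itself \<Rightarrow> bool" where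
  "tvs_axioms _ \<longleftrightarrow>
     continuous_on (UNIV :: ('a \<times> 'a) set) (\<lambda>p. fst p + snd p) \<and>
     continuous_on (UNIV :: (real \<times> 'a) set) (\<lambda>p. fst p *\<^sub>R snd p)"

text \<open>A net is represented by a (proper) filter on the pairs
(X_alpha, lambda_alpha): the net X_alpha in C, lambda_alpha \<ge> 0,
lambda_alpha \<rightarrow> 0 and lambda_alpha X_alpha \<rightarrow> X.\<close>
definition asym_cone :: "'a::{real_vector,topological_space} set \<Rightarrow> 'a set" where
  "asym_cone C = {X. \<exists>F :: ('a \<times> real) filter. F \<noteq> bot \<and>
       eventually (\<lambda>p. fst p \<in> C \<and> snd p \<ge> 0) F \<and>
       (snd \<longlongrightarrow> 0) F \<and>
       ((\<lambda>p. snd p *\<^sub>R fst p) \<longlongrightarrow> X) F}"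

definition epigraph :: "('b \<Rightarrow> real) \<Rightarrow> ('b \<times> real) set" where
  "epigraph f = {(x, m). f x \<le> m}"

definition asym_fun :: "('b::{real_vector,topological_space} \<Rightarrow> real) \<Rightarrow> 'b \<Rightarrow> ereal" where
  "asym_fun f x = Inf {ereal m | m. (x, m) \<in> asym_cone (epigraph f)}"

definition lower_semicont :: "('b::topological_space \<Rightarrow> real) \<Rightarrow> bool" where
  "lower_semicont f \<longleftrightarrow> (\<forall>c. closed {x. f x \<le> c})"

definition cone_le :: "'a::real_vector set \<Rightarrow> 'a \<Rightarrow> 'a \<Rightarrow> bool" where
  "cone_le Xp X Y \<longleftrightarrow> Y - X \<in> Xp"

definition superlinear :: "'a::real_vector set \<Rightarrow> ('b::real_vector \<Rightarrow> 'a) \<Rightarrow> bool" where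
  "superlinear Xp V \<longleftrightarrow>
     (\<forall>x y. \<forall>l::real. 0 \<le> l \<and> l \<le> 1 \<longrightarrow>
        cone_le Xp (l *\<^sub>R V x + (1 - l) *\<^sub>R V y) (V (l *\<^sub>R x + (1 - l) *\<^sub>R y))) \<and>
     (\<forall>x. \<forall>l::real. 0 \<le> l \<longrightarrow> V (l *\<^sub>R x) = l *\<^sub>R V x)"

definition L_set :: "'a::{real_vector,topological_space} set \<Rightarrow> ('b::{real_vector,topological_space} \<Rightarrow> real)
     \<Rightarrow> ('b \<Rightarrow> 'a) \<Rightarrow> 'b set \<Rightarrow> 'b set" where
  "L_set A V0 V1 P = {x \<in> asym_cone P. asym_fun V0 x \<le> 0 \<and> V1 x \<in> asym_cone A}"

definition C_set :: "'a::real_vector set \<Rightarrow> ('b \<Rightarrow> real) \<Rightarrow> ('b \<Rightarrow> 'a) \<Rightarrow> 'b set \<Rightarrow> ('a \<times> real) set" where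
  "C_set A V0 V1 P = {(X, m). \<exists>x\<in>P. V0 x \<le> m \<and> X + V1 x \<in> A}"

definition orth_compl_in :: "'b::real_inner set \<Rightarrow> 'b set \<Rightarrow> 'b set" where
  "orth_compl_in P N = {y \<in> span P. \<forall>z\<in>N. inner z y = 0}"

end

theory Submission
  imports Defs
begin

lemma tvs_add:
  assumes tvs: "tvs_axioms TYPE('a::{real_vector,topological_space})"
    and f: "(f \<longlongrightarrow> (a::'a)) F" and g: "(g \<longlongrightarrow> b) F"
  shows "((\<lambda>x. f x + g x) \<longlongrightarrow> a + b) F"
proof -
  have c: "continuous_on (UNIV :: ('a \<times> 'a) set) (\<lambda>p. fst p + snd p)"
    using tvs unfolding tvs_axioms_def by blast
  from continuous_on_tendsto_compose[OF c tendsto_Pair[OF f g]] show ?thesis by simp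
qed

lemma tvs_scale:
  assumes tvs: "tvs_axioms TYPE('a::{real_vector,topological_space})"
    and f: "(f \<longlongrightarrow> (r::real)) F" and g: "(g \<longlongrightarrow> (b::'a)) F"
  shows "((\<lambda>x. f x *\<^sub>R g x) \<longlongrightarrow> r *\<^sub>R b) F"
proof -
  have c: "continuous_on (UNIV :: (real \<times> 'a) set) (\<lambda>p. fst p *\<^sub>R snd p)"
    using tvs unfolding tvs_axioms_def by blast
  from continuous_on_tendsto_compose[OF c tendsto_Pair[OF f g]] show ?thesis by simp
qed

lemma tvs_normed: "tvs_axioms TYPE('a::real_normed_vector)"
  unfolding tvs_axioms_def by (intro conjI continuous_intros)

lemma asym_char:
  fixes C :: "'a::{real_vector,topological_space} set"
  assumes tvs: "tvs_axioms TYPE('a)" and cl: "closed C" and cv: "convex C" and z: "0 \<in> C"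
  shows "d \<in> asym_cone C \<longleftrightarrow> (\<forall>t\<ge>0. t *\<^sub>R d \<in> C)"
proof
  assume "d \<in> asym_cone C"
  then obtain F :: "('a \<times> real) filter" where Fb: "F \<noteq> bot"
    and ev: "eventually (\<lambda>p. fst p \<in> C \<and> snd p \<ge> 0) F"
    and s0: "(snd \<longlongrightarrow> 0) F" and lim: "((\<lambda>p. snd p *\<^sub>R fst p) \<longlongrightarrow> d) F"
    unfolding asym_cone_def by blast
  show "\<forall>t\<ge>0. t *\<^sub>R d \<in> C"
  proof (intro allI impI)
    fix t :: real assume t: "t \<ge> 0"
    have l2: "((\<lambda>p. t *\<^sub>R (snd p *\<^sub>R fst p)) \<longlongrightarrow> t *\<^sub>R d) F"
      by (rule tvs_scale[OF tvs tendsto_const lim])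
    have "eventually (\<lambda>p. snd p < 1 / (t + 1)) F"
      using order_tendstoD(2)[OF s0, of "1/(t+1)"] t by simp
    hence "eventually (\<lambda>p. t *\<^sub>R (snd p *\<^sub>R fst p) \<in> C) F"
      using ev
    proof eventually_elim
      case (elim p)
      let ?u = "t * snd p"
      have u0: "?u \<ge> 0" using elim t by simp
      have "?u \<le> t / (t+1)" using elim t
        by (metis mult_left_mono times_divide_eq_right mult_1_right less_imp_le)
      also have "\<dots> \<le> 1" using t by simp
      finally have u1: "?u \<le> 1" .
      have "(1 - ?u) *\<^sub>R 0 + ?u *\<^sub>R fst p \<in> C"
        using cv z elim u0 u1 unfolding convex_def
        by (metis diff_add_cancel diff_ge_0_iff_ge)
      thus ?case by simp
    qed
    from Lim_in_closed_set[OF cl this Fb l2] show "t *\<^sub>R d \<in> C" .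
  qed
next
  assume H: "\<forall>t\<ge>0. t *\<^sub>R d \<in> C"
  define F where "F = filtermap (\<lambda>n::nat. (real (Suc n) *\<^sub>R d, 1 / real (Suc n))) sequentially"
  have "F \<noteq> bot" unfolding F_def by (simp add: filtermap_bot_iff)
  moreover have "eventually (\<lambda>p. fst p \<in> C \<and> snd p \<ge> 0) F"
    unfolding F_def eventually_filtermap using H by simp
  moreover have "(snd \<longlongrightarrow> 0) F"
    unfolding F_def filterlim_filtermap using LIMSEQ_Suc[OF lim_inverse_n'] by (simp add: o_def)
  moreover have "((\<lambda>p. snd p *\<^sub>R fst p) \<longlongrightarrow> d) F"
    unfolding F_def filterlim_filtermap by simp
  ultimately show "d \<in> asym_cone C" unfolding asym_cone_def by blast
qed

lemma recession:
  fixes C :: "'a::{real_vector,topological_space} set"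
  assumes tvs: "tvs_axioms TYPE('a)" and cl: "closed C" and cv: "convex C" and x: "x \<in> C"
    and H: "\<forall>t\<ge>0. t *\<^sub>R d \<in> C"
  shows "x + d \<in> C"
proof -
  define s where "s = (\<lambda>n::nat. 1 / real (Suc n))"
  have s0: "s \<longlonglongrightarrow> 0" unfolding s_def using LIMSEQ_Suc[OF lim_inverse_n'] by (simp add: o_def)
  have "((\<lambda>n. (1 - s n) *\<^sub>R x + d) \<longlongrightarrow> (1 - 0) *\<^sub>R x + d) sequentially"
    by (intro tvs_add[OF tvs] tvs_scale[OF tvs] tendsto_diff tendsto_const s0)
  hence lim: "((\<lambda>n. (1 - s n) *\<^sub>R x + d) \<longlongrightarrow> x + d) sequentially" by simp
  have "eventually (\<lambda>n. (1 - s n) *\<^sub>R x + d \<in> C) sequentially"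
  proof (intro always_eventually allI)
    fix n
    have sp: "s n > 0" "s n \<le> 1" unfolding s_def by (auto simp: field_simps)
    have "(1 / s n) *\<^sub>R d \<in> C" using H sp by simp
    hence "(1 - s n) *\<^sub>R x + s n *\<^sub>R ((1 / s n) *\<^sub>R d) \<in> C"
      using cv x sp unfolding convex_def
      by (metis diff_add_cancel diff_ge_0_iff_ge less_imp_le)
    thus "(1 - s n) *\<^sub>R x + d \<in> C" using sp by simp
  qed
  from Lim_in_closed_set[OF cl this _ lim] show ?thesis by simp
qed


lemma epi_closed:
  fixes V0 :: "'b::real_normed_vector \<Rightarrow> real"
  assumes lsc: "lower_semicont V0"
  shows "closed (epigraph V0)"
  unfolding closed_sequential_limits
proof (intro allI impI)
  fix s :: "nat \<Rightarrow> 'b \<times> real" and l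
  assume H: "(\<forall>n. s n \<in> epigraph V0) \<and> s \<longlonglongrightarrow> l"
  obtain x m where l: "l = (x, m)" by (cases l)
  have sx: "(\<lambda>n. fst (s n)) \<longlonglongrightarrow> x" using tendsto_fst[of s l] H l by simp
  have sm: "(\<lambda>n. snd (s n)) \<longlonglongrightarrow> m" using tendsto_snd[of s l] H l by simp
  have "V0 x \<le> m + e" if e: "e > 0" for e
  proof -
    have ev: "eventually (\<lambda>n. snd (s n) < m + e) sequentially"
      using order_tendstoD(2)[OF sm] e by simp
    have "eventually (\<lambda>n. fst (s n) \<in> {z. V0 z \<le> m + e}) sequentially"
      using ev
    proof eventually_elim
      case (elim n)
      have "s n \<in> epigraph V0" using H by blast
      hence "V0 (fst (s n)) \<le> snd (s n)" unfolding epigraph_def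
        by (cases "s n") auto
      thus ?case using elim by simp
    qed
    from Lim_in_closed_set[OF _ this _ sx] lsc show ?thesis
      unfolding lower_semicont_def by auto
  qed
  hence "V0 x \<le> m" by (rule field_le_epsilon)
  thus "l \<in> epigraph V0" using l unfolding epigraph_def by simp
qed

lemma epi_convex:
  fixes V0 :: "'b::real_normed_vector \<Rightarrow> real"
  assumes cv: "convex_on UNIV V0"
  shows "convex (epigraph V0)"
  unfolding convex_def
proof (intro ballI allI impI)
  fix p q :: "'b \<times> real" and u v :: real
  assume p: "p \<in> epigraph V0" and q: "q \<in> epigraph V0" and u: "0 \<le> u" and v: "0 \<le> v"
    and uv: "u + v = 1"
  obtain x1 m1 where p': "p = (x1, m1)" by (cases p)
  obtain x2 m2 where q': "q = (x2, m2)" by (cases q)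
  have "V0 (u *\<^sub>R x1 + v *\<^sub>R x2) \<le> u * V0 x1 + v * V0 x2"
    using cv u v uv unfolding convex_on_def by blast
  also have "\<dots> \<le> u * m1 + v * m2"
    using p q p' q' u v unfolding epigraph_def
    by (intro add_mono mult_left_mono) auto
  finally show "u *\<^sub>R p + v *\<^sub>R q \<in> epigraph V0"
    using p' q' unfolding epigraph_def by simp
qed

lemma asym_fun_le0:
  fixes V0 :: "'b::real_normed_vector \<Rightarrow> real"
  assumes cl: "closed (epigraph V0)" and cv: "convex (epigraph V0)" and V00: "V0 0 = 0"
  shows "asym_fun V0 x \<le> 0 \<longleftrightarrow> (\<forall>t\<ge>0. V0 (t *\<^sub>R x) \<le> 0)"
proof -
  have z: "0 \<in> epigraph V0" using V00 by (simp add: epigraph_def zero_prod_def)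
  have ch: "(x, m) \<in> asym_cone (epigraph V0) \<longleftrightarrow> (\<forall>t\<ge>0. V0 (t *\<^sub>R x) \<le> t * m)" for m
    using asym_char[OF tvs_normed cl cv z, of "(x, m)"] by (simp add: epigraph_def)
  show ?thesis
  proof
    assume H: "asym_fun V0 x \<le> 0"
    show "\<forall>t\<ge>0. V0 (t *\<^sub>R x) \<le> 0"
    proof (intro allI impI)
      fix t :: real assume t: "t \<ge> 0"
      show "V0 (t *\<^sub>R x) \<le> 0"
      proof (rule ccontr)
        assume "\<not> V0 (t *\<^sub>R x) \<le> 0"
        hence pos: "V0 (t *\<^sub>R x) > 0" by simp
        have tp: "t > 0" using pos t V00 by (cases "t = 0") auto
        define e where "e = V0 (t *\<^sub>R x) / t"
        have ep: "e > 0" unfolding e_def using pos tp by simp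
        have "asym_fun V0 x < ereal e" using H ep by (metis ereal_less(2) le_less_trans zero_ereal_def)
        then obtain y where y: "y \<in> {ereal m | m. (x, m) \<in> asym_cone (epigraph V0)}" "y < ereal e"
          unfolding asym_fun_def using Inf_less_iff by blast
        then obtain m where m: "(x, m) \<in> asym_cone (epigraph V0)" "m < e" by auto
        have "V0 (t *\<^sub>R x) \<le> t * m" using ch m(1) t by blast
        also have "\<dots> < t * e" using m(2) tp by simp
        also have "\<dots> = V0 (t *\<^sub>R x)" unfolding e_def using tp by simp
        finally show False by simp
      qed
    qed
  next
    assume "\<forall>t\<ge>0. V0 (t *\<^sub>R x) \<le> 0"
    hence "(x, 0) \<in> asym_cone (epigraph V0)" using ch by simp
    hence "ereal 0 \<in> {ereal m | m. (x, m) \<in> asym_cone (epigraph V0)}" by blast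
    hence "asym_fun V0 x \<le> ereal 0" unfolding asym_fun_def by (rule Inf_lower)
    thus "asym_fun V0 x \<le> 0" by (simp add: zero_ereal_def)
  qed
qed

lemma uminus_image_iff: "(x::'a::ab_group_add) \<in> uminus ` S \<longleftrightarrow> - x \<in> S"
  by (metis image_eqI minus_minus imageE)

theorem mainTheorem13:
  fixes Xp :: "'a::{real_vector,topological_space} set"
    and P :: "(real^'n) set"
    and V0 :: "real^'n \<Rightarrow> real"
    and V1 :: "real^'n \<Rightarrow> 'a"
    and A :: "'a set"
  assumes tvs: "tvs_axioms TYPE('a)"
    and Xp_cone: "convex_cone Xp"
    and Xp_pointed: "\<forall>X. X \<in> Xp \<and> - X \<in> Xp \<longrightarrow> X = 0"
    and P0: "0 \<in> P"
    and V00: "V0 0 = 0" and V0_sym: "\<forall>x. V0 x \<ge> - V0 (- x)"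
    and V10: "V1 0 = 0" and V1_sym: "\<forall>x. cone_le Xp (V1 x) (- V1 (- x))"
    and A0: "0 \<in> A" and A_mono: "\<forall>X\<in>A. \<forall>Y\<in>Xp. X + Y \<in> A"
    and A_convex: "convex A" and A_closed: "closed A"
    and P_convex: "convex P" and P_closed: "closed P"
    and V0_convex: "convex_on UNIV V0" and V0_lsc: "lower_semicont V0"
    and V1_sl: "superlinear Xp V1"
  shows "subspace (L_set A V0 V1 P \<inter> uminus ` L_set A V0 V1 P) \<and>
         (\<forall>(X, m) \<in> C_set A V0 V1 P.
            \<exists>x \<in> P \<inter> orth_compl_in P (L_set A V0 V1 P \<inter> uminus ` L_set A V0 V1 P).
               V0 x \<le> m \<and> X + V1 x \<in> A)"
proof -
  have epc: "closed (epigraph V0)" by (rule epi_closed[OF V0_lsc])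
  have epv: "convex (epigraph V0)" by (rule epi_convex[OF V0_convex])
  have hom: "\<And>x l. l \<ge> 0 \<Longrightarrow> V1 (l *\<^sub>R x) = l *\<^sub>R V1 x"
    using V1_sl unfolding superlinear_def by blast
  have conc: "\<And>x y l. 0 \<le> l \<Longrightarrow> l \<le> 1 \<Longrightarrow>
      V1 (l *\<^sub>R x + (1 - l) *\<^sub>R y) - (l *\<^sub>R V1 x + (1 - l) *\<^sub>R V1 y) \<in> Xp"
    using V1_sl unfolding superlinear_def cone_le_def by blast
  have supadd: "V1 (a + b) - (V1 a + V1 b) \<in> Xp" for a b
  proof -
    have "V1 ((1/2) *\<^sub>R (2 *\<^sub>R a) + (1 - 1/2) *\<^sub>R (2 *\<^sub>R b))
       - ((1/2) *\<^sub>R V1 (2 *\<^sub>R a) + (1 - 1/2) *\<^sub>R V1 (2 *\<^sub>R b)) \<in> Xp"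
      by (rule conc) auto
    thus ?thesis using hom[of 2] by simp
  qed
  have Xc: "\<And>D c. D \<in> Xp \<Longrightarrow> c \<ge> 0 \<Longrightarrow> c *\<^sub>R D \<in> Xp"
    using Xp_cone unfolding convex_cone_def conic_def by blast
  define Lc where "Lc = {x. \<forall>t\<ge>0. t *\<^sub>R x \<in> P \<and> V0 (t *\<^sub>R x) \<le> 0 \<and> t *\<^sub>R V1 x \<in> A}"
  have LL: "L_set A V0 V1 P = Lc"
  proof -
    have "x \<in> L_set A V0 V1 P \<longleftrightarrow> x \<in> Lc" for x
      unfolding L_set_def Lc_def
      using asym_char[OF tvs_normed P_closed P_convex P0, of x]
        asym_char[OF tvs A_closed A_convex A0, of "V1 x"]
        asym_fun_le0[OF epc epv V00, of x] by auto
    thus ?thesis by blast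
  qed
  have Lc0: "0 \<in> Lc" unfolding Lc_def using P0 V00 A0 V10 by simp
  have Lcs: "c *\<^sub>R x \<in> Lc" if x: "x \<in> Lc" and c: "c \<ge> 0" for x c
    unfolding Lc_def mem_Collect_eq
  proof (intro allI impI)
    fix t :: real assume t: "t \<ge> 0"
    have tc: "t * c \<ge> 0" using t c by simp
    show "t *\<^sub>R c *\<^sub>R x \<in> P \<and> V0 (t *\<^sub>R c *\<^sub>R x) \<le> 0 \<and> t *\<^sub>R V1 (c *\<^sub>R x) \<in> A"
      using x tc hom[OF c] unfolding Lc_def by auto
  qed
  have Lca: "x + y \<in> Lc" if x: "x \<in> Lc" and y: "y \<in> Lc" for x y
    unfolding Lc_def mem_Collect_eq
  proof (intro allI impI conjI)
    fix t :: real assume t: "t \<ge> 0"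
    have tt: "2 * t \<ge> 0" using t by simp
    have hh: "(1/2::real) + 1/2 = 1" "(0::real) \<le> 1/2" by simp_all
    have e: "t *\<^sub>R (x + y) = (1/2) *\<^sub>R ((2*t) *\<^sub>R x) + (1/2) *\<^sub>R ((2*t) *\<^sub>R y)"
      by (simp add: scaleR_add_right)
    have xP: "(2*t) *\<^sub>R x \<in> P" and yP: "(2*t) *\<^sub>R y \<in> P"
      using x y tt unfolding Lc_def by auto
    show "t *\<^sub>R (x + y) \<in> P" unfolding e
      using P_convex xP yP unfolding convex_def by (metis hh)
    have "V0 (t *\<^sub>R (x + y)) \<le> (1/2) * V0 ((2*t) *\<^sub>R x) + (1/2) * V0 ((2*t) *\<^sub>R y)"
      unfolding e using V0_convex unfolding convex_on_def
      by (metis UNIV_I hh)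
    also have "\<dots> \<le> 0"
    proof -
      have "V0 ((2*t) *\<^sub>R x) \<le> 0" "V0 ((2*t) *\<^sub>R y) \<le> 0"
        using x y tt unfolding Lc_def by auto
      thus ?thesis by simp
    qed
    finally show "V0 (t *\<^sub>R (x + y)) \<le> 0" .
    have xA: "(2*t) *\<^sub>R V1 x \<in> A" and yA: "(2*t) *\<^sub>R V1 y \<in> A"
      using x y tt unfolding Lc_def by auto
    have "(1/2) *\<^sub>R ((2*t) *\<^sub>R V1 x) + (1/2) *\<^sub>R ((2*t) *\<^sub>R V1 y) \<in> A"
      using A_convex xA yA unfolding convex_def by (metis hh)
    hence a1: "t *\<^sub>R (V1 x + V1 y) \<in> A" by (simp add: scaleR_add_right)
    have a2: "t *\<^sub>R (V1 (x + y) - (V1 x + V1 y)) \<in> Xp" using Xc[OF supadd t] .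
    have "t *\<^sub>R (V1 x + V1 y) + t *\<^sub>R (V1 (x + y) - (V1 x + V1 y)) \<in> A"
      using A_mono a1 a2 by blast
    thus "t *\<^sub>R V1 (x + y) \<in> A" by (simp add: algebra_simps)
  qed
  define N where "N = Lc \<inter> uminus ` Lc"
  have Nm: "x \<in> N \<longleftrightarrow> x \<in> Lc \<and> - x \<in> Lc" for x
    unfolding N_def using uminus_image_iff by blast
  have sub: "subspace N"
    unfolding subspace_def
  proof (intro conjI ballI allI)
    show "0 \<in> N" using Nm Lc0 by simp
  next
    fix x y assume "x \<in> N" "y \<in> N"
    thus "x + y \<in> N" using Nm Lca[of "-x" "-y"] Lca[of x y] by auto
  next
    fix c :: real and x assume x: "x \<in> N"
    show "c *\<^sub>R x \<in> N"
    proof (cases "c \<ge> 0")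
      case True thus ?thesis using x Nm Lcs[of x c] Lcs[of "-x" c] by auto
    next
      case False
      hence "-c \<ge> 0" by simp
      thus ?thesis using x Nm Lcs[of x "-c"] Lcs[of "-x" "-c"] by auto
    qed
  qed
  have part2: "\<exists>x' \<in> P \<inter> orth_compl_in P N. V0 x' \<le> m \<and> X + V1 x' \<in> A"
    if XC: "(X, m) \<in> C_set A V0 V1 P" for X m
  proof -
    obtain x where x: "x \<in> P" "V0 x \<le> m" "X + V1 x \<in> A"
      using XC unfolding C_set_def by blast
    obtain y z where y: "y \<in> span N" and z: "\<And>w. w \<in> span N \<Longrightarrow> orthogonal z w"
      and xyz: "x = y + z"
      using orthogonal_subspace_decomp_exists[of N x] by metis
    have yN: "y \<in> N" using y sub span_eq_iff by blast
    hence my: "-y \<in> Lc" using Nm by blast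
    have zd: "z = x + (- y)" using xyz by simp
    have zP: "z \<in> P" unfolding zd
      by (rule recession[OF tvs_normed P_closed P_convex x(1)]) (use my in \<open>simp add: Lc_def\<close>)
    have "(x, V0 x) + (- y, 0) \<in> epigraph V0"
      by (rule recession[OF tvs_normed epc epv]) (use my in \<open>auto simp: Lc_def epigraph_def\<close>)
    hence "V0 z \<le> V0 x" unfolding zd by (simp add: epigraph_def)
    hence v0: "V0 z \<le> m" using x(2) by simp
    have "(X + V1 x) + V1 (- y) \<in> A"
      by (rule recession[OF tvs A_closed A_convex x(3)]) (use my in \<open>simp add: Lc_def\<close>)
    hence "(X + V1 x + V1 (- y)) + (V1 (x + - y) - (V1 x + V1 (- y))) \<in> A"
      using A_mono supadd by blast
    hence v1: "X + V1 z \<in> A" unfolding zd by (simp add: algebra_simps)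
    have "z \<in> orth_compl_in P N"
      unfolding orth_compl_in_def using zP z span_base[of z P]
      by (simp add: orthogonal_def inner_commute span_base)
    thus ?thesis using zP v0 v1 by blast
  qed
  show ?thesis unfolding LL N_def[symmetric] using sub part2 by auto
qed

end
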